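(* Let $w\ge0$ and let $\tilde x:[0,1]\to\mathbb R$ solve $$\tilde x'(s)=(w+1)-w\tanh\bigl(s\,\tilde x(s)\bigr),\qquad \tilde x(0)=x.$$ If $x\ge-\frac{\sqrt{w+1}}{2}$, then $\tilde x(1)\ge\frac{\sqrt{w+1}}{4}$.
   Context: This ODE is the (time-reparametrized, $T\to\infty$ limit of the) guided probability flow ODE with guidance parameter $w$ toward the component $z=+1$ for the Gaussian mixture $\frac12\mathcal N(1,1)+\frac12\mathcal N(-1,1)$; $\tilde x(1)$ is the output sample for initialization $x$. *)

theory Defs
  imports "HOL-Analysis.Analysis"
begin

end

theory Submission
  imports Defs
begin

lemma incr_helper:
  fixes f f' :: "real \<Rightarrow> real"
  assumes pq: "p \<le> q"
    and d: "\<And>s. s \<in> {p..q} \<Longrightarrow> (f has_real_derivative f' s) (at s within {p..q})"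
    and c: "\<And>s. s \<in> {p<..<q} \<Longrightarrow> f' s \<ge> c"
  shows "f q - f p \<ge> c * (q - p)"
proof -
  let ?g = "\<lambda>s. f s - c * s"
  have "?g p \<le> ?g q"
  proof (rule DERIV_nonneg_imp_increasing_open[OF pq])
    fix s assume s: "p < s" "s < q"
    have "(f has_real_derivative f' s) (at s)"
      using d[of s] s at_within_Icc_at[of p s q] by auto
    then have "(?g has_real_derivative f' s - c) (at s)"
      by (auto intro!: derivative_eq_intros)
    then show "\<exists>y. (?g has_real_derivative y) (at s) \<and> 0 \<le> y"
      using c[of s] s by auto
  next
    have "continuous_on {p..q} f"
      using d DERIV_continuous continuous_on_eq_continuous_within by blast
    then show "continuous_on {p..q} ?g"
      by (intro continuous_intros)
  qed
  then show ?thesis by (simp add: algebra_simps)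
qed

lemma tanh_le_self:
  fixes y :: real
  assumes "y \<ge> 0"
  shows "tanh y \<le> y"
proof -
  have "(\<lambda>t. t - tanh t) y - (\<lambda>t. t - tanh t) 0 \<ge> 0 * (y - 0)"
  proof (rule incr_helper[where f' = "\<lambda>t. 1 - (1 - tanh t ^ 2)" and c = 0 and p = 0 and q = y])
    fix s :: real
    have "cosh s \<noteq> 0" by (metis cosh_real_pos less_irrefl)
    then have "((\<lambda>t. t - tanh t) has_real_derivative 1 - (1 - tanh s ^ 2)) (at s)"
      by (auto intro!: derivative_eq_intros)
    then show "((\<lambda>t. t - tanh t) has_real_derivative 1 - (1 - tanh s ^ 2)) (at s within {0..y})"
      by (rule has_field_derivative_at_within)
  next
    show "0 \<le> y" using assms .
  next
    fix s :: real
    show "0 \<le> 1 - (1 - tanh s ^ 2)" by simp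
  qed
  then show ?thesis by simp
qed

theorem lemma4p2:
  fixes w x :: real and xt :: "real \<Rightarrow> real"
  assumes w: "w \<ge> 0"
    and ode: "\<And>s. s \<in> {0..1} \<Longrightarrow>
       (xt has_real_derivative ((w + 1) - w * tanh (s * xt s))) (at s within {0..1})"
    and init: "xt 0 = x"
    and x: "x \<ge> - sqrt (w + 1) / 2"
  shows "xt 1 \<ge> sqrt (w + 1) / 4"
proof (rule ccontr)
  assume neg: "\<not> ?thesis"
  define a where "a = sqrt (w + 1)"
  have a2: "a ^ 2 = w + 1" using w by (simp add: a_def)
  have a1: "a \<ge> 1" using w by (simp add: a_def)
  have ge1: "(w + 1) - w * tanh t \<ge> 1" for t
  proof -
    have "w * tanh t \<le> w * 1" using w tanh_real_lt_1[of t] by (intro mult_left_mono) auto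
    then show ?thesis by simp
  qed
  have sub: "(xt has_real_derivative ((w + 1) - w * tanh (s * xt s))) (at s within {p..q})"
    if "0 \<le> p" "q \<le> 1" "s \<in> {p..q}" for p q s
    using ode[of s] that by (auto intro: DERIV_subset)
  have mono: "xt q - xt p \<ge> 1 * (q - p)" if "0 \<le> p" "p \<le> q" "q \<le> 1" for p q
    by (rule incr_helper[OF that(2)]) (use sub that ge1 in auto)
  have lt: "xt 1 < a / 4" using neg by (simp add: a_def)
  have ia: "1 / a \<le> 1" "0 \<le> 1 / a" using a1 by auto
  have bound: "(w + 1) - w * tanh (s * xt s) \<ge> 3/4 * a^2" if s: "s \<in> {0<..<1/a}" for s
  proof -
    have "xt s \<le> xt 1" using mono[of s 1] s ia by auto
    have "s * xt s \<le> 1/4"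
    proof (cases "xt s \<ge> 0")
      case True
      have "s * xt s \<le> (1/a) * (a/4)"
        using s True \<open>xt s \<le> xt 1\<close> lt by (intro mult_mono) auto
      also have "\<dots> = 1/4" using a1 by simp
      finally show ?thesis .
    next
      case False
      then have "s * xt s \<le> 0" using s by (simp add: mult_nonneg_nonpos)
      then show ?thesis by simp
    qed
    then have "tanh (s * xt s) \<le> tanh (1/4)" by simp
    then have "tanh (s * xt s) \<le> 1/4"
      using tanh_le_self[of "1/4"] by linarith
    then have "w * tanh (s * xt s) \<le> w * (1/4)" using w by (intro mult_left_mono)
    then show ?thesis using a2 w by simp
  qed
  have "xt (1/a) - xt 0 \<ge> 3/4 * a^2 * (1/a - 0)"
    by (rule incr_helper) (use sub ia bound in auto)
  then have "xt (1/a) - xt 0 \<ge> 3/4 * a" using a1 by (simp add: power2_eq_square)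
  moreover have "xt 1 - xt (1/a) \<ge> 1 * (1 - 1/a)" using mono[of "1/a" 1] ia by auto
  moreover have "xt 0 \<ge> - a / 2" using init x by (simp add: a_def)
  ultimately have "xt 1 \<ge> a/4 + (1 - 1/a)" by simp
  then show False using lt ia by linarith
qed

end
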